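(* Let $n,d,d_k$ be positive integers, $X\in\mathbb{R}^{n\times d}$, $W_Q,W_K\in\mathbb{R}^{d\times d_k}$, $E\in\mathbb{R}^{n\times n}$, and let $P\in\mathbb{R}^{d\times d}$ be an orthogonal projector ($P=P^\top=P^2$). Put $B=W_QW_K^\top$, $X_P=XP$, $$G_Q=\frac{X^\top E X W_K}{\sqrt{d_k}},\qquad G_K=\frac{X^\top E^\top X W_Q}{\sqrt{d_k}}.$$ For real step sizes $\eta_Q,\eta_K\ge 0$ let $W_Q^+=W_Q-\eta_QG_Q$, $W_K^+=W_K-\eta_KG_K$, $B^+=W_Q^+(W_K^+)^\top$, and $$\Delta Z_P=\frac{X_P\,P(B^+-B)P\,X_P^\top}{\sqrt{d_k}}.$$ Then $$\|\Delta Z_P\|_F\le \frac{\|X_P\|_{\mathrm{op}}^2\|X_P\|_F\|E\|_{\mathrm{op}}}{d_k}\Big(\eta_Q\|XW_KW_K^\top P\|_F+\eta_K\|XW_QW_Q^\top P\|_F\Big)+R_2,$$ where $$R_2=\frac{\eta_Q\eta_K\|X_P\|_{\mathrm{op}}^2\|X_P\|_F^2\|E\|_{\mathrm{op}}^2\|XW_K\|_F\|XW_Q\|_F}{d_k^{3/2}}.$$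
   Context: $\|\cdot\|_F$ denotes the Frobenius norm and $\|\cdot\|_{\mathrm{op}}$ the spectral (operator) norm. Interpretation: $X$ is the normalized residual stream entering an attention head with logits $Z=XBX^\top/\sqrt{d_k}$, $P$ projects onto "immature" residual directions, $E$ plays the role of $\partial\mathcal{L}/\partial Z$, and $G_Q,G_K$ are then the gradients of the loss with respect to $W_Q,W_K$; $\Delta Z_P$ is the change of the immature-to-immature logit component $Z_P=X_P PBP X_P^\top/\sqrt{d_k}$ after one gradient step. *)

theory Defs
  imports "HOL-Analysis.Analysis"
begin

definition fro_norm :: "real^'c^'r \<Rightarrow> real" where
  "fro_norm A = sqrt (\<Sum>i\<in>UNIV. \<Sum>j\<in>UNIV. (A $ i $ j)^2)"

definition op_norm :: "real^'c^'r \<Rightarrow> real" where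
  "op_norm A = onorm (\<lambda>x. A *v x)"

end

theory Submission
  imports Defs
begin

lemma mm_diff_l: "(A::real^'m^'n) ** (B - C) = A ** B - A ** C"
  by (simp add: matrix_matrix_mult_def vec_eq_iff sum_subtractf algebra_simps)
lemma mm_diff_r: "((A::real^'m^'n) - B) ** C = A ** C - B ** C"
  by (simp add: matrix_matrix_mult_def vec_eq_iff sum_subtractf algebra_simps)
lemma mm_add_r: "((A::real^'m^'n) + B) ** C = A ** C + B ** C"
  by (simp add: matrix_matrix_mult_def vec_eq_iff sum.distrib algebra_simps)
lemma tr_diff: "transpose ((A::real^'m^'n) - B) = transpose A - transpose B"
  by (simp add: transpose_def vec_eq_iff)
lemma mm_scale_r: "(k *\<^sub>R (A::real^'m^'n)) ** B = k *\<^sub>R (A ** B)"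
  by (simp add: scalar_matrix_assoc)
lemma mm_scale_l: "(A::real^'m^'n) ** (k *\<^sub>R B) = k *\<^sub>R (A ** B)"
  by (simp add: matrix_scalar_ac scalar_matrix_assoc)

lemma norm_sq_mat: "(norm (A::real^'m^'n))^2 = (\<Sum>i\<in>UNIV. \<Sum>j\<in>UNIV. (A $ i $ j)^2)"
  by (simp add: norm_vec_def L2_set_def sum_nonneg)

lemma fro_eq: "fro_norm (A::real^'m^'n) = norm A"
  unfolding fro_norm_def norm_sq_mat[symmetric] by simp

lemma norm_transpose: "norm (transpose (A::real^'m^'n)) = norm A"
proof -
  have "(norm (transpose A))^2 = (norm A)^2"
  proof -
    have "(\<Sum>i\<in>UNIV. \<Sum>j\<in>UNIV. (transpose A $ i $ j)^2) = (\<Sum>i\<in>UNIV. \<Sum>j\<in>UNIV. (A $ j $ i)^2)"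
      by (simp add: transpose_def)
    also have "\<dots> = (\<Sum>j\<in>UNIV. \<Sum>i\<in>UNIV. (A $ j $ i)^2)" by (rule sum.swap)
    finally show ?thesis unfolding norm_sq_mat .
  qed
  then show ?thesis by (simp add: power2_eq_iff_nonneg)
qed

lemma op_nonneg: "0 \<le> op_norm (A::real^'m^'n)"
  unfolding op_norm_def by (rule onorm_pos_le) simp

lemma op_mv: "norm ((A::real^'m^'n) *v x) \<le> op_norm A * norm x"
  unfolding op_norm_def by (rule onorm) simp

lemma op_le_fro_aux: "norm ((A::real^'m^'n) *v x) \<le> norm A * norm x"
proof -
  have "norm (A *v x) = L2_set (\<lambda>i. \<bar>inner (A$i) x\<bar>) UNIV"
    by (simp add: norm_vec_def matrix_vector_mul_component)
  also have "\<dots> \<le> L2_set (\<lambda>i. norm (A$i) * norm x) UNIV"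
    by (rule L2_set_mono) (auto simp: Cauchy_Schwarz_ineq2)
  also have "\<dots> = norm A * norm x"
    by (simp add: norm_vec_def L2_set_left_distrib)
  finally show ?thesis .
qed

lemma op_le_fro: "op_norm (A::real^'m^'n) \<le> norm A"
  unfolding op_norm_def by (rule onorm_le) (rule op_le_fro_aux)

lemma op_transpose_le: "op_norm (transpose (A::real^'m^'n)) \<le> op_norm A"
  unfolding op_norm_def
proof (rule onorm_le)
  fix x :: "real^'n"
  let ?y = "transpose A *v x"
  have "(norm ?y)^2 = inner ?y ?y" by (simp add: power2_norm_eq_inner)
  also have "\<dots> = inner x (A *v ?y)"
    by (metis dot_lmul_matrix inner_commute transpose_matrix_vector transpose_transpose vector_transpose_matrix)
  also have "\<dots> \<le> norm x * norm (A *v ?y)" by (rule norm_cauchy_schwarz)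
  also have "\<dots> \<le> norm x * (op_norm A * norm ?y)"
    by (rule mult_left_mono[OF op_mv]) simp
  finally have h: "(norm ?y)^2 \<le> op_norm A * norm x * norm ?y" by (simp add: algebra_simps)
  show "norm ?y \<le> onorm ((*v) A) * norm x"
  proof (cases "norm ?y = 0")
    case True then show ?thesis using op_nonneg[of A] by (simp add: op_norm_def)
  next
    case False
    then have "norm ?y > 0" by simp
    with h have "norm ?y \<le> op_norm A * norm x" by (simp add: power2_eq_square)
    then show ?thesis by (simp add: op_norm_def)
  qed
qed

lemma op_transpose: "op_norm (transpose (A::real^'m^'n)) = op_norm A"
  using op_transpose_le[of A] op_transpose_le[of "transpose A"] by simp

lemma mulR: "norm ((C::real^'m^'n) ** D) \<le> norm C * op_norm (D::real^'p^'m)"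
proof -
  have row: "(C ** D) $ i = transpose D *v (C $ i)" for i
    by (simp add: matrix_matrix_mult_def matrix_vector_mult_def transpose_def vec_eq_iff mult.commute)
  have "norm (C ** D) = L2_set (\<lambda>i. norm (transpose D *v (C $ i))) UNIV"
    by (simp add: norm_vec_def row del: transpose_matrix_vector)
  also have "\<dots> \<le> L2_set (\<lambda>i. norm (C $ i) * op_norm D) UNIV"
  proof (rule L2_set_mono)
    fix i
    have "norm (transpose D *v (C $ i)) \<le> op_norm (transpose D) * norm (C $ i)" by (rule op_mv)
    then show "norm (transpose D *v (C $ i)) \<le> norm (C $ i) * op_norm D"
      by (simp only: op_transpose mult.commute)
  qed simp
  also have "\<dots> = norm C * op_norm D"
    by (simp add: norm_vec_def L2_set_left_distrib op_nonneg)
  finally show ?thesis .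
qed

lemma mulL: "norm ((A::real^'m^'n) ** (B::real^'p^'m)) \<le> op_norm A * norm B"
proof -
  have "norm (A ** B) = norm (transpose B ** transpose A)"
    by (metis matrix_transpose_mul norm_transpose)
  also have "\<dots> \<le> norm (transpose B) * op_norm (transpose A)" by (rule mulR)
  finally show ?thesis by (simp add: norm_transpose op_transpose mult.commute)
qed


lemma dZP_eq:
  fixes X :: "real^'d^'n" and WQ WK :: "real^'k^'d" and E :: "real^'n^'n"
    and P :: "real^'d^'d"
  assumes Ps: "transpose P = P" and Pi: "P ** P = P"
  shows "s *\<^sub>R ((X ** P) ** (P ** ((WQ - eQ *\<^sub>R (s *\<^sub>R (transpose X ** E ** X ** WK))) **
            transpose (WK - eK *\<^sub>R (s *\<^sub>R (transpose X ** transpose E ** X ** WQ)))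
          - WQ ** transpose WK) ** P) ** transpose (X ** P))
   = (- (s * s * eQ)) *\<^sub>R ((X ** P) ** transpose (X ** P) ** E ** (X ** WK ** transpose WK ** P) ** transpose (X ** P))
   + (- (s * s * eK)) *\<^sub>R ((X ** P) ** transpose (X ** WQ ** transpose WQ ** P) ** E ** (X ** P) ** transpose (X ** P))
   + (s * s * s * eQ * eK) *\<^sub>R ((X ** P) ** transpose (X ** P) ** E ** (X ** WK) ** transpose (X ** WQ) ** E ** (X ** P) ** transpose (X ** P))"
proof -
  have pc: "M ** P ** P = M ** P" for M :: "real^'d^'a"
    by (metis Pi matrix_mul_assoc)
  show ?thesis
    apply (simp only: tr_diff transpose_scalar matrix_transpose_mul transpose_transpose Ps
       mm_diff_l mm_diff_r mm_add_r matrix_add_ldistrib mm_scale_l mm_scale_r matrix_mul_assoc pc)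
    apply (simp add: algebra_simps)
    done
qed

lemma op_mul: "op_norm ((A::real^'m^'n) ** (B::real^'p^'m)) \<le> op_norm A * op_norm B"
  unfolding op_norm_def[of "A ** B"]
proof (rule onorm_le)
  fix x
  have "norm ((A ** B) *v x) = norm (A *v (B *v x))" by (simp add: matrix_vector_mul_assoc)
  also have "\<dots> \<le> op_norm A * norm (B *v x)" by (rule op_mv)
  also have "\<dots> \<le> op_norm A * (op_norm B * norm x)" by (rule mult_left_mono[OF op_mv op_nonneg])
  finally show "norm ((A ** B) *v x) \<le> op_norm A * op_norm B * norm x" by (simp add: mult.assoc)
qed

lemma main_bound:
  fixes X :: "real^'d^'n" and WQ WK :: "real^'k^'d" and E :: "real^'n^'n"
    and P :: "real^'d^'d" and eQ eK s :: real
  assumes eQ: "eQ \<ge> 0" and eK: "eK \<ge> 0" and s: "s \<ge> 0"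
  defines "XP \<equiv> X ** P"
  shows "norm ((- (s * s * eQ)) *\<^sub>R (XP ** transpose XP ** E ** (X ** WK ** transpose WK ** P) ** transpose XP)
   + (- (s * s * eK)) *\<^sub>R (XP ** transpose (X ** WQ ** transpose WQ ** P) ** E ** XP ** transpose XP)
   + (s * s * s * eQ * eK) *\<^sub>R (XP ** transpose XP ** E ** (X ** WK) ** transpose (X ** WQ) ** E ** XP ** transpose XP))
   \<le> (s * s * eQ) * ((op_norm XP)^2 * norm XP * op_norm E * norm (X ** WK ** transpose WK ** P))
     + (s * s * eK) * ((op_norm XP)^2 * norm XP * op_norm E * norm (X ** WQ ** transpose WQ ** P))
     + (s * s * s * eQ * eK) * ((op_norm XP)^2 * (norm XP)^2 * (op_norm E)^2 * norm (X ** WK) * norm (X ** WQ))"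
proof -
  define a where "a = op_norm XP"
  define f where "f = norm XP"
  define e where "e = op_norm E"
  define Y where "Y = X ** WK ** transpose WK ** P"
  define Z where "Z = X ** WQ ** transpose WQ ** P"
  define U where "U = X ** WK"
  define V where "V = X ** WQ"
  have a0: "a \<ge> 0" and e0: "e \<ge> 0" and af: "a \<le> f" and aT: "op_norm (transpose XP) = a"
    using op_nonneg op_le_fro op_transpose by (auto simp: a_def e_def f_def)
  have opK: "op_norm (XP ** transpose XP ** E) \<le> a * a * e"
  proof -
    have "op_norm (XP ** transpose XP ** E) \<le> op_norm (XP ** transpose XP) * e"
      unfolding e_def by (rule op_mul)
    also have "\<dots> \<le> (a * a) * e"
      by (rule mult_right_mono[OF _ e0]) (metis op_mul aT a_def)
    finally show ?thesis .
  qed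
  have b1: "norm (XP ** transpose XP ** E ** Y ** transpose XP) \<le> a^2 * f * e * norm Y"
  proof -
    have h1: "norm (XP ** transpose XP ** E ** Y ** transpose XP) \<le> norm (XP ** transpose XP ** E ** Y) * a"
      using mulR[of "XP ** transpose XP ** E ** Y" "transpose XP"] aT by simp
    have h2: "norm (XP ** transpose XP ** E ** Y) \<le> a * a * e * norm Y"
      by (rule order_trans[OF mulL mult_right_mono[OF opK norm_ge_zero]])
    have h3: "norm (XP ** transpose XP ** E ** Y ** transpose XP) \<le> (a * a * e * norm Y) * a"
      using h1 h2 a0 by (meson mult_right_mono order_trans)
    have "0 \<le> a * a * e * norm Y" using a0 e0 by simp
    then have "(a * a * e * norm Y) * a \<le> (a * a * e * norm Y) * f" by (rule mult_left_mono[OF af])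
    with h3 show ?thesis by (simp add: power2_eq_square mult_ac)
  qed
  have b2: "norm (XP ** transpose Z ** E ** XP ** transpose XP) \<le> a^2 * f * e * norm Z"
  proof -
    have h1: "norm (XP ** transpose Z ** E ** XP ** transpose XP) \<le> norm (XP ** transpose Z ** E ** XP) * a"
      using mulR[of "XP ** transpose Z ** E ** XP" "transpose XP"] aT by simp
    have h2: "norm (XP ** transpose Z ** E ** XP) \<le> norm (XP ** transpose Z ** E) * a"
      using mulR[of "XP ** transpose Z ** E" "XP"] by (simp add: a_def)
    have h3: "norm (XP ** transpose Z ** E) \<le> norm (XP ** transpose Z) * e"
      using mulR[of "XP ** transpose Z" "E"] by (simp add: e_def)
    have h4: "norm (XP ** transpose Z) \<le> a * norm Z"
      using mulL[of "XP" "transpose Z"] by (simp add: a_def norm_transpose)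
    have g3: "norm (XP ** transpose Z ** E) \<le> a * norm Z * e"
      using h3 h4 e0 by (meson mult_right_mono order_trans)
    have g2: "norm (XP ** transpose Z ** E ** XP) \<le> a * norm Z * e * a"
      using h2 g3 a0 by (meson mult_right_mono order_trans)
    have g1: "norm (XP ** transpose Z ** E ** XP ** transpose XP) \<le> a * norm Z * e * a * a"
      using h1 g2 a0 by (meson mult_right_mono order_trans)
    have "0 \<le> a * norm Z * e * a" using a0 e0 by simp
    then have "a * norm Z * e * a * a \<le> a * norm Z * e * a * f" by (rule mult_left_mono[OF af])
    with g1 show ?thesis by (simp add: power2_eq_square mult_ac)
  qed
  have b3: "norm (XP ** transpose XP ** E ** U ** transpose V ** E ** XP ** transpose XP) \<le> a^2 * f^2 * e^2 * norm U * norm V"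
  proof -
    have h1: "norm (XP ** transpose XP ** E ** U ** transpose V ** E ** XP ** transpose XP) \<le> norm (XP ** transpose XP ** E ** U ** transpose V ** E ** XP) * a"
      using mulR[of "XP ** transpose XP ** E ** U ** transpose V ** E ** XP" "transpose XP"] aT by simp
    have h2: "norm (XP ** transpose XP ** E ** U ** transpose V ** E ** XP) \<le> norm (XP ** transpose XP ** E ** U ** transpose V ** E) * a"
      using mulR[of "XP ** transpose XP ** E ** U ** transpose V ** E" "XP"] by (simp add: a_def)
    have h3: "norm (XP ** transpose XP ** E ** U ** transpose V ** E) \<le> norm (XP ** transpose XP ** E ** U ** transpose V) * e"
      using mulR[of "XP ** transpose XP ** E ** U ** transpose V" "E"] by (simp add: e_def)
    have h4a: "norm (XP ** transpose XP ** E ** U ** transpose V) \<le> norm (XP ** transpose XP ** E ** U) * op_norm (transpose V)"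
      by (rule mulR)
    have h4b: "op_norm (transpose V) \<le> norm V"
      using op_le_fro[of "transpose V"] by (simp only: norm_transpose)
    have h4: "norm (XP ** transpose XP ** E ** U ** transpose V) \<le> norm (XP ** transpose XP ** E ** U) * norm V"
      using h4a h4b by (meson mult_left_mono norm_ge_zero order_trans)
    have h5: "norm (XP ** transpose XP ** E ** U) \<le> a * a * e * norm U"
      by (rule order_trans[OF mulL mult_right_mono[OF opK norm_ge_zero]])
    have g4: "norm (XP ** transpose XP ** E ** U ** transpose V) \<le> a * a * e * norm U * norm V"
      using h4 h5 by (meson mult_right_mono norm_ge_zero order_trans)
    have g3: "norm (XP ** transpose XP ** E ** U ** transpose V ** E) \<le> a * a * e * norm U * norm V * e"
      using h3 g4 e0 by (meson mult_right_mono order_trans)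
    have g2: "norm (XP ** transpose XP ** E ** U ** transpose V ** E ** XP) \<le> a * a * e * norm U * norm V * e * a"
      using h2 g3 a0 by (meson mult_right_mono order_trans)
    have g1: "norm (XP ** transpose XP ** E ** U ** transpose V ** E ** XP ** transpose XP) \<le> a * a * e * norm U * norm V * e * a * a"
      using h1 g2 a0 by (meson mult_right_mono order_trans)
    have k0: "0 \<le> a * a * e * norm U * norm V * e" using a0 e0 by simp
    have "a * a * e * norm U * norm V * e * (a * a) \<le> a * a * e * norm U * norm V * e * (f * f)"
      using mult_left_mono[OF mult_mono[OF af af order_trans[OF a0 af] a0] k0] .
    with g1 show ?thesis by (simp add: power2_eq_square mult_ac)
  qed
  have c1: "0 \<le> s * s * eQ" "0 \<le> s * s * eK" "0 \<le> s * s * s * eQ * eK" using s eQ eK by auto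
  have "norm ((- (s * s * eQ)) *\<^sub>R (XP ** transpose XP ** E ** Y ** transpose XP)
   + (- (s * s * eK)) *\<^sub>R (XP ** transpose Z ** E ** XP ** transpose XP)
   + (s * s * s * eQ * eK) *\<^sub>R (XP ** transpose XP ** E ** U ** transpose V ** E ** XP ** transpose XP))
   \<le> (s * s * eQ) * norm (XP ** transpose XP ** E ** Y ** transpose XP)
     + (s * s * eK) * norm (XP ** transpose Z ** E ** XP ** transpose XP)
     + (s * s * s * eQ * eK) * norm (XP ** transpose XP ** E ** U ** transpose V ** E ** XP ** transpose XP)"
  proof -
    have t: "norm (x + y + z) \<le> norm x + norm y + norm z" for x y z :: "real^'n^'n"
      by (rule order_trans[OF norm_triangle_ineq add_right_mono[OF norm_triangle_ineq]])
    show ?thesis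
      by (rule order_trans[OF t]) (simp only: norm_scaleR abs_minus_cancel abs_of_nonneg[OF c1(1)] abs_of_nonneg[OF c1(2)] abs_of_nonneg[OF c1(3)] order_refl)
  qed
  also have "\<dots> \<le> (s * s * eQ) * (a^2 * f * e * norm Y) + (s * s * eK) * (a^2 * f * e * norm Z)
     + (s * s * s * eQ * eK) * (a^2 * f^2 * e^2 * norm U * norm V)"
    by (intro add_mono mult_left_mono b1 b2 b3 c1)
  finally show ?thesis unfolding a_def f_def e_def Y_def Z_def U_def V_def .
qed

theorem theorem1:
  fixes X :: "real^'d^'n" and WQ WK :: "real^'k^'d" and E :: "real^'n^'n"
    and P :: "real^'d^'d" and etaQ etaK :: real
  assumes P_sym: "transpose P = P" and P_idem: "P ** P = P"
    and etaQ: "etaQ \<ge> 0" and etaK: "etaK \<ge> 0"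
  shows
    "let dk = real CARD('k);
         B = WQ ** transpose WK;
         XP = X ** P;
         GQ = (1 / sqrt dk) *\<^sub>R (transpose X ** E ** X ** WK);
         GK = (1 / sqrt dk) *\<^sub>R (transpose X ** transpose E ** X ** WQ);
         WQp = WQ - etaQ *\<^sub>R GQ;
         WKp = WK - etaK *\<^sub>R GK;
         Bp = WQp ** transpose WKp;
         dZP = (1 / sqrt dk) *\<^sub>R (XP ** (P ** (Bp - B) ** P) ** transpose XP);
         R2 = etaQ * etaK * (op_norm XP)^2 * (fro_norm XP)^2 * (op_norm E)^2
                * fro_norm (X ** WK) * fro_norm (X ** WQ) / (dk powr (3/2))
     in fro_norm dZP \<le>
          (op_norm XP)^2 * fro_norm XP * op_norm E / dk
            * (etaQ * fro_norm (X ** WK ** transpose WK ** P)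
               + etaK * fro_norm (X ** WQ ** transpose WQ ** P))
          + R2"
  proof -
  define dk where "dk = real CARD('k)"
  define s where "s = 1 / sqrt dk"
  have dk0: "dk > 0" by (simp add: dk_def)
  have s0: "s \<ge> 0" using dk0 by (simp add: s_def)
  have ss: "s * s = 1 / dk" using dk0 by (simp add: s_def)
  have p32: "dk powr (3/2) = dk * sqrt dk"
  proof -
    have "dk powr (3/2) = dk powr (1 + 1/2)" by simp
    also have "\<dots> = dk * dk powr (1/2)" unfolding powr_add using dk0 by simp
    also have "\<dots> = dk * sqrt dk" using dk0 by (simp add: powr_half_sqrt)
    finally show ?thesis .
  qed
  show ?thesis
    unfolding Let_def fro_eq dk_def[symmetric] s_def[symmetric]
    unfolding dZP_eq[OF P_sym P_idem]
    apply (rule order_trans[OF main_bound[OF etaQ etaK s0]])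
    apply (simp only: ss)
    apply (simp only: p32 s_def)
    using dk0 apply (simp add: field_simps)
    done
qed

end
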